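(* Let $G\in\mathcal{G}$ be a graph, let $t\in T_G$, and let $\epsilon$ be an internal edge of the binary tree $t$. Then there exist a unique tree $t'\in T_G$ with $t'\neq t$ and a unique internal edge $\epsilon'$ of $t'$ such that $t/\epsilon=t'/\epsilon'$ (equality of trees with leaves labeled by the vertices of $G$).
   Context: A graph is a triple $(\Gamma,\sigma,\lambda)$: a finite set $\Gamma$ of flags (half-edges), an involution $\sigma$ of $\Gamma$ (two-element orbits are edges, fixed points are legs), and a partition $\lambda$ of $\Gamma$ whose blocks are the vertices. $\mathcal{G}$ denotes the set of isomorphism classes of directed, connected graphs with labeled input and output legs and without directed cycles (directed: each vertex's flags are split into inputs and outputs, and each edge joins an output flag to an input flag). For two vertices $v,v'$, the thick edge from $v$ to $v'$ is the set of all directed edges from $v$ to $v'$; a directed path/cycle is a sequence of thick edges following directions. Contracting a thick edge $\epsilon$ between $v_i,v_j$ gives the graph $G/\epsilon$ in which $v_i,v_j$ are replaced by the single vertex $(v_i\sqcup v_j)\smallsetminus\{\text{flags of }\epsilon\}$; $\epsilon$ is admissible if $G/\epsilon$ has no directed cycles. For $G$ with $k$ vertices, a contraction sequence is a sequence of $k-1$ thick edges, each admissible in the graph obtained by contracting the previous ones, thus reducing $G$ to a one-vertex graph. To a contraction sequence one associates a binary rooted tree whose leaves are labeled by the vertices of $G$ and whose internal vertices correspond to the successive contractions (the vertex for the $i$-th contraction has as children the subtrees corresponding to the two vertices merged). $T_G$ is the set of such binary trees arising from contraction sequences of $G$ (equivalently, contraction sequences modulo the equivalence identifying sequences with isomorphic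 associated trees). An internal edge of $t$ is an edge between two internal vertices of $t$; $t/\epsilon$ denotes the (no longer binary) tree obtained by contracting it. *)

theory Defs
  imports Main "HOL-Library.Disjoint_Sets"
begin

text \<open>A graph is given by a finite set of flags Gam, an involution sig of Gam,
  a partition lam of Gam (the vertices), and a set inp of input flags
  (the remaining flags Gam - inp are output flags).  Legs are fixed points of sig,
  edges are two-element orbits.  ilab/olab label the input/output legs.\<close>

definition legs :: "'f set \<Rightarrow> ('f \<Rightarrow> 'f) \<Rightarrow> 'f set" where
  "legs Gam sig = {f \<in> Gam. sig f = f}"

definition thick :: "'f set \<Rightarrow> ('f \<Rightarrow> 'f) \<Rightarrow> 'f set \<Rightarrow> 'f set \<Rightarrow> 'f set \<Rightarrow> bool" where
  "thick Gam sig inp v w \<longleftrightarrow> (\<exists>f\<in>v. f \<in> Gam - inp \<and> sig f \<noteq> f \<and> sig f \<in> w)"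

definition thick_rel :: "'f set \<Rightarrow> ('f \<Rightarrow> 'f) \<Rightarrow> 'f set set \<Rightarrow> 'f set \<Rightarrow> ('f set \<times> 'f set) set" where
  "thick_rel Gam sig lam inp = {(v, w). v \<in> lam \<and> w \<in> lam \<and> thick Gam sig inp v w}"

text \<open>Membership in the class \<open>\<G>\<close> (we work with a representative).\<close>
definition graph_G :: "'f set \<Rightarrow> ('f \<Rightarrow> 'f) \<Rightarrow> 'f set set \<Rightarrow> 'f set
    \<Rightarrow> ('f \<Rightarrow> nat) \<Rightarrow> ('f \<Rightarrow> nat) \<Rightarrow> bool" where
  "graph_G Gam sig lam inp ilab olab \<longleftrightarrow>
     finite Gam
   \<and> (\<forall>f\<in>Gam. sig f \<in> Gam \<and> sig (sig f) = f)
   \<and> partition_on Gam lam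
   \<and> inp \<subseteq> Gam
   \<and> (\<forall>f\<in>Gam. sig f \<noteq> f \<longrightarrow> (f \<in> inp \<longleftrightarrow> sig f \<notin> inp))
   \<and> bij_betw ilab (legs Gam sig \<inter> inp) {1..card (legs Gam sig \<inter> inp)}
   \<and> bij_betw olab (legs Gam sig - inp) {1..card (legs Gam sig - inp)}
   \<and> (\<forall>v\<in>lam. \<forall>w\<in>lam. (v, w) \<in> (thick_rel Gam sig lam inp \<union> (thick_rel Gam sig lam inp)\<inverse>)\<^sup>*)
   \<and> acyclic (thick_rel Gam sig lam inp)"

datatype 'v btree = Leaf 'v | Node "'v btree" "'v btree"

fun leaves :: "'v btree \<Rightarrow> 'v set" where
  "leaves (Leaf v) = {v}"
| "leaves (Node a b) = leaves a \<union> leaves b"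

text \<open>A rooted tree with distinctly labeled leaves (no unary vertices) is represented,
  up to isomorphism, by the set of leaf sets of its vertices (its clusters).\<close>
fun clusters :: "'v btree \<Rightarrow> 'v set set" where
  "clusters (Leaf v) = {{v}}"
| "clusters (Node a b) = insert (leaves a \<union> leaves b) (clusters a \<union> clusters b)"

text \<open>The graph obtained after some contractions: its vertices are the merged blocks,
  each recorded by the binary tree of contractions producing it (leaves = original
  vertices).\<close>
definition qrel :: "('v \<Rightarrow> 'v \<Rightarrow> bool) \<Rightarrow> 'v btree set \<Rightarrow> ('v btree \<times> 'v btree) set" where
  "qrel E S = {(a, b). a \<in> S \<and> b \<in> S \<and> a \<noteq> b \<and> (\<exists>v\<in>leaves a. \<exists>w\<in>leaves b. E v w)}"

inductive csteps :: "('v \<Rightarrow> 'v \<Rightarrow> bool) \<Rightarrow> 'v btree set \<Rightarrow> 'v btree set \<Rightarrow> bool" for E where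
  refl: "csteps E S S"
| step: "csteps E S S' \<Longrightarrow> a \<in> S' \<Longrightarrow> b \<in> S' \<Longrightarrow> (a, b) \<in> qrel E S'
         \<Longrightarrow> acyclic (qrel E (insert (Node a b) (S' - {a, b})))
         \<Longrightarrow> csteps E S (insert (Node a b) (S' - {a, b}))"

definition T_G :: "'f set \<Rightarrow> ('f \<Rightarrow> 'f) \<Rightarrow> 'f set set \<Rightarrow> 'f set \<Rightarrow> 'f set set set set" where
  "T_G Gam sig lam inp =
     {clusters t | t. csteps (thick Gam sig inp) (Leaf ` lam) {t}}"

text \<open>Internal edge of a tree (given by its clusters): an edge from a parent to a child
  vertex C with both internal, i.e. C is neither a leaf nor the root.  Contracting it
  removes the cluster C.\<close>
definition internal_edge :: "'v set set \<Rightarrow> 'v set \<Rightarrow> bool" where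
  "internal_edge H C \<longleftrightarrow> C \<in> H \<and> 2 \<le> card C \<and> C \<noteq> \<Union>H"

definition contract_edge :: "'v set set \<Rightarrow> 'v set \<Rightarrow> 'v set set" where
  "contract_edge H C = H - {C}"

end

theory Submission
  imports Defs
begin

fun subtrees :: "'v btree \<Rightarrow> 'v btree set" where
  "subtrees (Leaf v) = {Leaf v}"
| "subtrees (Node a b) = insert (Node a b) (subtrees a \<union> subtrees b)"

fun wft :: "'v btree \<Rightarrow> bool" where
  "wft (Leaf v) = True"
| "wft (Node a b) = (wft a \<and> wft b \<and> leaves a \<inter> leaves b = {})"

definition ed :: "('v \<Rightarrow> 'v \<Rightarrow> bool) \<Rightarrow> 'v set \<Rightarrow> 'v set \<Rightarrow> bool" where
  "ed E X Y \<longleftrightarrow> (\<exists>v\<in>X. \<exists>w\<in>Y. E v w)"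

lemma ed_Un1[simp]: "ed E (X \<union> Y) Z \<longleftrightarrow> ed E X Z \<or> ed E Y Z"
  unfolding ed_def by blast
lemma ed_Un2[simp]: "ed E Z (X \<union> Y) \<longleftrightarrow> ed E Z X \<or> ed E Z Y"
  unfolding ed_def by blast
lemma ed_mono: "ed E X Y \<Longrightarrow> X \<subseteq> X' \<Longrightarrow> Y \<subseteq> Y' \<Longrightarrow> ed E X' Y'"
  unfolding ed_def by blast

lemma qrel_iff: "(a, b) \<in> qrel E S \<longleftrightarrow> a \<in> S \<and> b \<in> S \<and> a \<noteq> b \<and> ed E (leaves a) (leaves b)"
  unfolding qrel_def ed_def by auto

lemma leaves_ne[simp]: "leaves u \<noteq> {}"
  by (induction u) auto
lemma leaves_fin[simp]: "finite (leaves u)"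
  by (induction u) auto

lemma self_sub[simp]: "u \<in> subtrees u"
  by (cases u) auto
lemma leaves_sub: "x \<in> subtrees u \<Longrightarrow> leaves x \<subseteq> leaves u"
  by (induction u) auto
lemma clusters_sub: "X \<in> clusters u \<Longrightarrow> X \<subseteq> leaves u"
  by (induction u) auto
lemma leaves_in_clusters[simp]: "leaves u \<in> clusters u"
  by (cases u) auto
lemma clusters_subtree: "x \<in> subtrees u \<Longrightarrow> clusters x \<subseteq> clusters u"
  by (induction u) auto
lemma Union_clusters: "\<Union>(clusters u) = leaves u"
  using clusters_sub leaves_in_clusters by blast
lemma clusters_ne: "X \<in> clusters u \<Longrightarrow> X \<noteq> {}"
  by (induction u) auto
lemma clusters_fin: "X \<in> clusters u \<Longrightarrow> finite X"
  using clusters_sub leaves_fin finite_subset by metis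
lemma wft_sub: "wft u \<Longrightarrow> x \<in> subtrees u \<Longrightarrow> wft x"
  by (induction u) auto

definition lamnr :: "'a set set \<Rightarrow> bool" where
  "lamnr H \<longleftrightarrow> (\<forall>X\<in>H. \<forall>Y\<in>H. X \<subseteq> Y \<or> Y \<subseteq> X \<or> X \<inter> Y = {})"

lemma lamnr_D: "lamnr H \<Longrightarrow> X \<in> H \<Longrightarrow> Y \<in> H \<Longrightarrow> X \<subseteq> Y \<or> Y \<subseteq> X \<or> X \<inter> Y = {}"
  unfolding lamnr_def by blast

lemma laminar: "wft u \<Longrightarrow> lamnr (clusters u)"
proof (induction u)
  case (Leaf v) then show ?case by (auto simp: lamnr_def)
next
  case (Node a b)
  then have la: "lamnr (clusters a)" and lb: "lamnr (clusters b)" and d: "leaves a \<inter> leaves b = {}" by auto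
  show ?case unfolding lamnr_def
  proof (intro ballI)
    fix X Y assume X: "X \<in> clusters (Node a b)" and Y: "Y \<in> clusters (Node a b)"
    have sa: "\<forall>W\<in>clusters a. W \<subseteq> leaves a" and sb: "\<forall>W\<in>clusters b. W \<subseteq> leaves b"
      using clusters_sub by blast+
    consider "X = leaves a \<union> leaves b" | "X \<in> clusters a" | "X \<in> clusters b" using X by auto
    then show "X \<subseteq> Y \<or> Y \<subseteq> X \<or> X \<inter> Y = {}"
    proof cases
      case 1 then show ?thesis using Y sa sb by auto
    next
      case 2
      consider "Y = leaves a \<union> leaves b" | "Y \<in> clusters a" | "Y \<in> clusters b" using Y by auto
      then show ?thesis
      proof cases
        case 1 then show ?thesis using 2 sa by auto
      next
        case 3 then show ?thesis using 2 sa sb d by blast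
      qed (use 2 la in \<open>auto simp: lamnr_def\<close>)
    next
      case 3
      consider "Y = leaves a \<union> leaves b" | "Y \<in> clusters a" | "Y \<in> clusters b" using Y by auto
      then show ?thesis
      proof cases
        case 1 then show ?thesis using 3 sb by auto
      next
        case 2 then show ?thesis using 3 sa sb d by blast
      qed (use 3 lb in \<open>auto simp: lamnr_def\<close>)
    qed
  qed
qed

lemma child_ex: "X \<in> clusters u \<Longrightarrow> \<exists>x\<in>subtrees u. leaves x = X"
  by (induction u) auto

lemma parent_ex: "X \<in> clusters u \<Longrightarrow> X \<noteq> leaves u \<Longrightarrow>
   \<exists>y z. Node y z \<in> subtrees u \<and> (leaves y = X \<or> leaves z = X)"
proof (induction u)
  case (Leaf v) then show ?case by auto
next
  case (Node a b)
  show ?case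
  proof (cases "X = leaves a \<or> X = leaves b")
    case True then show ?thesis by auto
  next
    case False
    then have "X \<in> clusters a \<or> X \<in> clusters b" using Node.prems by auto
    then show ?thesis
    proof
      assume "X \<in> clusters a"
      then obtain y z where "Node y z \<in> subtrees a" "leaves y = X \<or> leaves z = X" using Node.IH(1) False by blast
      then show ?thesis by auto
    next
      assume "X \<in> clusters b"
      then obtain y z where "Node y z \<in> subtrees b" "leaves y = X \<or> leaves z = X" using Node.IH(2) False by blast
      then show ?thesis by auto
    qed
  qed
qed

lemma sub_lam: "wft u \<Longrightarrow> x \<in> subtrees u \<Longrightarrow> W \<in> clusters u \<Longrightarrow>
   W \<in> clusters x \<or> leaves x \<subseteq> W \<or> W \<inter> leaves x = {}"
proof (induction u)
  case (Leaf v) then show ?case by auto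
next
  case (Node a b)
  show ?case
  proof (cases "x = Node a b")
    case True then show ?thesis using Node.prems by auto
  next
    case False
    then have xs: "x \<in> subtrees a \<or> x \<in> subtrees b" using Node.prems by auto
    have d: "leaves a \<inter> leaves b = {}" using Node.prems by auto
    consider "W = leaves a \<union> leaves b" | "W \<in> clusters a" | "W \<in> clusters b" using Node.prems by auto
    then show ?thesis
    proof cases
      case 1 then have "leaves x \<subseteq> W" using xs leaves_sub by fastforce
      then show ?thesis by blast
    next
      case 2
      show ?thesis
      proof (cases "x \<in> subtrees a")
        case True then show ?thesis using Node.IH(1)[OF _ True 2] Node.prems(1) by simp
      next
        case False then have "x \<in> subtrees b" using xs by auto
        then have "leaves x \<subseteq> leaves b" by (rule leaves_sub)
        then show ?thesis using clusters_sub[OF 2] d by blast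
      qed
    next
      case 3
      show ?thesis
      proof (cases "x \<in> subtrees b")
        case True then show ?thesis using Node.IH(2)[OF _ True 3] Node.prems(1) by simp
      next
        case False then have "x \<in> subtrees a" using xs by auto
        then have "leaves x \<subseteq> leaves a" by (rule leaves_sub)
        then show ?thesis using clusters_sub[OF 3] d by blast
      qed
    qed
  qed
qed

definition splt :: "'a set set \<Rightarrow> 'a set \<Rightarrow> 'a set \<Rightarrow> 'a set \<Rightarrow> bool" where
  "splt H X Y Z \<longleftrightarrow> X \<in> H \<and> Y \<in> H \<and> Z \<in> H \<and> Y \<noteq> {} \<and> Z \<noteq> {} \<and> Y \<inter> Z = {} \<and> X = Y \<union> Z
     \<and> (\<forall>W\<in>H. W \<subset> X \<longrightarrow> W \<subseteq> Y \<or> W \<subseteq> Z)"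

lemma splt_sym: "splt H X Y Z \<Longrightarrow> splt H X Z Y"
  unfolding splt_def by blast

lemma splt_uniq: "splt H X Y Z \<Longrightarrow> splt H X Y' Z' \<Longrightarrow> (Y = Y' \<and> Z = Z') \<or> (Y = Z' \<and> Z = Y')"
proof -
  assume a: "splt H X Y Z" and b: "splt H X Y' Z'"
  have A: "Y \<noteq> {}" "Z \<noteq> {}" "Y \<inter> Z = {}" "X = Y \<union> Z" "\<forall>W\<in>H. W \<subset> X \<longrightarrow> W \<subseteq> Y \<or> W \<subseteq> Z"
    using a unfolding splt_def by auto
  have B: "Y' \<noteq> {}" "Z' \<noteq> {}" "Y' \<inter> Z' = {}" "X = Y' \<union> Z'" "Y' \<in> H" "Z' \<in> H"
    using b unfolding splt_def by auto
  have "Y' \<subset> X" "Z' \<subset> X" using B by blast+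
  then have 1: "Y' \<subseteq> Y \<or> Y' \<subseteq> Z" "Z' \<subseteq> Y \<or> Z' \<subseteq> Z" using A(5) B(5,6) by blast+
  show ?thesis
  proof (cases "Y' \<subseteq> Y")
    case True
    show ?thesis
    proof (cases "Z' \<subseteq> Y")
      case True
      then have "X \<subseteq> Y" using \<open>Y' \<subseteq> Y\<close> B(4) by blast
      then show ?thesis using A(1-4) by blast
    next
      case False
      then have "Z' \<subseteq> Z" using 1 by blast
      then show ?thesis using \<open>Y' \<subseteq> Y\<close> A(1-4) B(1-4) by blast
    qed
  next
    case False
    then have y: "Y' \<subseteq> Z" using 1 by blast
    show ?thesis
    proof (cases "Z' \<subseteq> Z")
      case True
      then have "X \<subseteq> Z" using y B(4) by blast
      then show ?thesis using A(1-4) by blast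
    next
      case False
      then have "Z' \<subseteq> Y" using 1 by blast
      then show ?thesis using y A(1-4) B(1-4) by blast
    qed
  qed
qed

lemma splt_node: "wft u \<Longrightarrow> Node y z \<in> subtrees u \<Longrightarrow>
   splt (clusters u) (leaves y \<union> leaves z) (leaves y) (leaves z)"
proof -
  assume w: "wft u" and n: "Node y z \<in> subtrees u"
  have c: "clusters (Node y z) \<subseteq> clusters u" using clusters_subtree[OF n] .
  have wn: "wft (Node y z)" using wft_sub[OF w n] .
  show ?thesis unfolding splt_def
  proof (intro conjI ballI impI)
    show "leaves y \<union> leaves z \<in> clusters u" using c by auto
    show "leaves y \<in> clusters u" using c leaves_in_clusters[of y] by auto
    show "leaves z \<in> clusters u" using c leaves_in_clusters[of z] by auto
    show "leaves y \<inter> leaves z = {}" using wn by auto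
  next
    fix W assume W: "W \<in> clusters u" "W \<subset> leaves y \<union> leaves z"
    have "W \<in> clusters (Node y z) \<or> leaves (Node y z) \<subseteq> W \<or> W \<inter> leaves (Node y z) = {}"
      using sub_lam[OF w n W(1)] .
    moreover have "W \<noteq> {}" using clusters_ne W(1) by blast
    ultimately have "W \<in> clusters y \<or> W \<in> clusters z" using W(2) by auto
    then show "W \<subseteq> leaves y \<or> W \<subseteq> leaves z" using clusters_sub by blast
  qed auto
qed

definition Inv :: "'v btree set \<Rightarrow> bool" where
  "Inv S \<longleftrightarrow> (\<forall>u\<in>S. wft u) \<and> (\<forall>u\<in>S. \<forall>w\<in>S. u \<noteq> w \<longrightarrow> leaves u \<inter> leaves w = {})"

lemma Inv_overlap: "Inv S \<Longrightarrow> u \<in> S \<Longrightarrow> w \<in> S \<Longrightarrow> leaves u \<inter> leaves w \<noteq> {} \<Longrightarrow> u = w"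
  unfolding Inv_def by blast

lemma Inv_sub: "Inv S \<Longrightarrow> u \<in> S \<Longrightarrow> w \<in> S \<Longrightarrow> leaves u \<subseteq> leaves w \<Longrightarrow> u = w"
  using Inv_overlap leaves_ne by (metis inf.absorb1)

lemma Inv_wft: "Inv S \<Longrightarrow> u \<in> S \<Longrightarrow> wft u"
  unfolding Inv_def by blast

lemma Inv_merge: "Inv S \<Longrightarrow> a \<in> S \<Longrightarrow> b \<in> S \<Longrightarrow> a \<noteq> b \<Longrightarrow> Inv (insert (Node a b) (S - {a,b}))"
  unfolding Inv_def by auto

lemma Inv_child: "Inv S \<Longrightarrow> Node a b \<in> S \<Longrightarrow> a \<notin> S \<and> b \<notin> S"
proof -
  assume I: "Inv S" and n: "Node a b \<in> S"
  have "a \<notin> S"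
  proof
    assume "a \<in> S"
    then have "a = Node a b" using Inv_sub[OF I _ n, of a] by auto
    then show False by simp
  qed
  moreover have "b \<notin> S"
  proof
    assume "b \<in> S"
    then have "b = Node a b" using Inv_sub[OF I _ n, of b] by auto
    then show False by simp
  qed
  ultimately show ?thesis by blast
qed

lemma csteps_Inv: "csteps E X Y \<Longrightarrow> Inv X \<Longrightarrow> Inv Y"
  by (induction rule: csteps.induct) (auto intro: Inv_merge simp: qrel_iff)

lemma csteps_acyc: "csteps E X Y \<Longrightarrow> acyclic (qrel E X) \<Longrightarrow> acyclic (qrel E Y)"
  by (induction rule: csteps.induct) auto

lemma csteps_trans: "csteps E Y Z \<Longrightarrow> csteps E X Y \<Longrightarrow> csteps E X Z"
  by (induction rule: csteps.induct) (auto intro: csteps.step)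

lemma csteps_mono: "csteps E X Y \<Longrightarrow> u \<in> X \<Longrightarrow> \<exists>w\<in>Y. leaves u \<subseteq> leaves w"
proof (induction rule: csteps.induct)
  case (refl S) then show ?case by auto
next
  case (step S S' a b)
  then obtain w where w: "w \<in> S'" "leaves u \<subseteq> leaves w" by blast
  show ?case
  proof (cases "w = a \<or> w = b")
    case True
    then have "leaves u \<subseteq> leaves (Node a b)" using w by auto
    then show ?thesis by blast
  next
    case False then show ?thesis using w by blast
  qed
qed

lemma form: "csteps E X Y \<Longrightarrow> w \<in> Y \<Longrightarrow> Node p q \<in> subtrees w \<Longrightarrow> (\<forall>u\<in>X. Node p q \<notin> subtrees u) \<Longrightarrow>
  \<exists>S. csteps E X S \<and> p \<in> S \<and> q \<in> S \<and> (p, q) \<in> qrel E S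
     \<and> acyclic (qrel E (insert (Node p q) (S - {p, q}))) \<and> csteps E (insert (Node p q) (S - {p, q})) Y"
proof (induction arbitrary: w rule: csteps.induct)
  case (refl S) then show ?case by blast
next
  case (step S S' a b)
  have ext: "csteps E M S' \<Longrightarrow> csteps E M (insert (Node a b) (S' - {a, b}))" for M
    using step.hyps by (auto intro: csteps.step)
  show ?case
  proof (cases "w = Node a b")
    case True
    show ?thesis
    proof (cases "Node p q = Node a b")
      case True
      then show ?thesis using step.hyps by (auto intro: csteps.refl)
    next
      case False
      then have "Node p q \<in> subtrees a \<or> Node p q \<in> subtrees b" using step.prems True by auto
      then obtain w' where "w' \<in> S'" "Node p q \<in> subtrees w'" using step.hyps by blast
      then show ?thesis using step.IH[OF _ _ step.prems(3)] ext by blast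
    qed
  next
    case False
    then have "w \<in> S'" using step.prems by auto
    then show ?thesis using step.IH[OF _ step.prems(2,3)] ext by blast
  qed
qed

lemma split_acyc:
  assumes n: "Node p q \<in> Z" and pq: "p \<noteq> q" and ac: "acyclic (qrel E Z)"
    and ne: "\<not> ed E (leaves q) (leaves p)"
  shows "acyclic (qrel E (insert p (insert q (Z - {Node p q}))))"
proof -
  let ?Z' = "insert p (insert q (Z - {Node p q}))"
  define f where "f u = (if u = p \<or> u = q then Node p q else u)" for u
  have lf: "leaves u \<subseteq> leaves (f u)" for u unfolding f_def by auto
  have edge: "(f v, f w) \<in> qrel E Z" if vw: "(v, w) \<in> qrel E ?Z'" "(v, w) \<noteq> (p, q)" for v w
  proof -
    have v: "v \<in> ?Z'" and w: "w \<in> ?Z'" and vw': "v \<noteq> w" and e: "ed E (leaves v) (leaves w)"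
      using vw(1) by (auto simp: qrel_iff)
    have "\<not> ((v = p \<or> v = q) \<and> (w = p \<or> w = q))"
      using vw(2) vw' e ne by auto
    then have "f v \<noteq> f w" "f v \<in> Z" "f w \<in> Z" using v w vw' n unfolding f_def by auto
    moreover have "ed E (leaves (f v)) (leaves (f w))" using ed_mono[OF e lf lf] .
    ultimately show ?thesis by (simp add: qrel_iff)
  qed
  have main: "(u, v) \<in> (qrel E ?Z')\<^sup>+ \<Longrightarrow> (f u, f v) \<in> (qrel E Z)\<^sup>+ \<or> (u = p \<and> v = q)" for u v
  proof (induction rule: trancl_induct)
    case (base y)
    then show ?case using edge by (cases "(u, y) = (p, q)") auto
  next
    case (step y z)
    show ?case
    proof (cases "(y, z) = (p, q)")
      case True
      then have "f y = f z" unfolding f_def by auto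
      then show ?thesis using step.IH True pq by auto
    next
      case False
      then have yz: "(f y, f z) \<in> qrel E Z" using edge step.hyps(2) by blast
      from step.IH show ?thesis
      proof
        assume "(f u, f y) \<in> (qrel E Z)\<^sup>+"
        then have "(f u, f z) \<in> (qrel E Z)\<^sup>+" using yz by (rule trancl_into_trancl)
        then show ?thesis by blast
      next
        assume "u = p \<and> y = q"
        then have "f u = f y" unfolding f_def by auto
        then show ?thesis using yz by auto
      qed
    qed
  qed
  show ?thesis unfolding acyclic_def
  proof
    fix u show "(u, u) \<notin> (qrel E ?Z')\<^sup>+"
    proof
      assume "(u, u) \<in> (qrel E ?Z')\<^sup>+"
      from main[OF this] show False using ac pq unfolding acyclic_def by auto
    qed
  qed
qed

lemma acyc_map:
  assumes inj: "inj_on f Z" and lv: "\<forall>u\<in>Z. leaves (f u) = leaves u" and ac: "acyclic (qrel E Z)"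
  shows "acyclic (qrel E (f ` Z))"
proof -
  have edge: "\<exists>x' y'. x = f x' \<and> y = f y' \<and> (x', y') \<in> qrel E Z" if "(x, y) \<in> qrel E (f ` Z)" for x y
  proof -
    from that obtain x' y' where "x' \<in> Z" "y' \<in> Z" "x = f x'" "y = f y'" "x \<noteq> y" "ed E (leaves x) (leaves y)"
      by (auto simp: qrel_iff)
    then show ?thesis using lv by (auto simp: qrel_iff)
  qed
  have main: "(x, y) \<in> (qrel E (f ` Z))\<^sup>+ \<Longrightarrow> \<exists>x' y'. x = f x' \<and> y = f y' \<and> x' \<in> Z \<and> y' \<in> Z \<and> (x', y') \<in> (qrel E Z)\<^sup>+" for x y
  proof (induction rule: trancl_induct)
    case (base y)
    then show ?case using edge by (fastforce simp: qrel_iff)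
  next
    case (step y z)
    then obtain x' y' where 1: "x = f x'" "y = f y'" "x' \<in> Z" "y' \<in> Z" "(x', y') \<in> (qrel E Z)\<^sup>+" by blast
    obtain y'' z' where 2: "y = f y''" "z = f z'" "(y'', z') \<in> qrel E Z" using edge step.hyps(2) by blast
    have "y'' \<in> Z" "z' \<in> Z" using 2(3) by (auto simp: qrel_iff)
    then have "y'' = y'" using 1 2 inj unfolding inj_on_def by auto
    then have "(x', z') \<in> (qrel E Z)\<^sup>+" using 1(5) 2(3) by (meson trancl_into_trancl)
    then show ?case using 1 2 \<open>z' \<in> Z\<close> by blast
  qed
  show ?thesis unfolding acyclic_def
  proof
    fix x show "(x, x) \<notin> (qrel E (f ` Z))\<^sup>+"
    proof
      assume "(x, x) \<in> (qrel E (f ` Z))\<^sup>+"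
      then obtain x' y' where "x = f x'" "x = f y'" "x' \<in> Z" "y' \<in> Z" "(x', y') \<in> (qrel E Z)\<^sup>+" using main by blast
      then have "x' = y'" using inj unfolding inj_on_def by auto
      then show False using ac \<open>(x', y') \<in> _\<close> unfolding acyclic_def by auto
    qed
  qed
qed

lemma Inv_inj: "Inv Z \<Longrightarrow> \<forall>u\<in>Z. leaves (f u) = leaves u \<Longrightarrow> inj_on f Z"
  unfolding inj_on_def using Inv_sub by (metis order_refl)

lemma delay:
  "csteps E S1 S2 \<Longrightarrow> S1 = insert (Node a b) (S - {a,b}) \<Longrightarrow> a \<in> S \<Longrightarrow> b \<in> S \<Longrightarrow> a \<noteq> b \<Longrightarrow> Inv S
   \<Longrightarrow> Node a b \<in> S2 \<Longrightarrow> \<not> ed E (leaves b) (leaves a)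
   \<Longrightarrow> csteps E S (insert a (insert b (S2 - {Node a b})))"
proof (induction rule: csteps.induct)
  case (refl S1)
  have "Node a b \<notin> S" using Inv_child[OF refl(5)] refl(2) by blast
  then have "insert a (insert b (S1 - {Node a b})) = S" using refl by auto
  then show ?case using csteps.refl by metis
next
  case (step S1 S' x y)
  have I1: "Inv S1" using Inv_merge[OF step.prems(5,2,3,4)] step.prems(1) by simp
  have I': "Inv S'" using csteps_Inv[OF step.hyps(1) I1] .
  have xy: "x \<noteq> y" using step.hyps(4) by (simp add: qrel_iff)
  let ?S2 = "insert (Node x y) (S' - {x, y})"
  have I2: "Inv ?S2" using Inv_merge[OF I' step.hyps(2,3) xy] .
  have nxy: "Node x y \<noteq> Node a b"
  proof
    assume eq: "Node x y = Node a b"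
    have "Node a b \<in> S1" using step.prems(1) by simp
    then obtain w where w: "w \<in> S'" "leaves (Node a b) \<subseteq> leaves w" using csteps_mono[OF step.hyps(1)] by blast
    have "a = w" using Inv_sub[OF I' _ w(1), of a] w(2) eq step.hyps(2) by auto
    then have "leaves b \<subseteq> leaves a" using w(2) by auto
    moreover have "leaves a \<inter> leaves b = {}" using Inv_overlap[OF I', of a b] eq step.hyps(2,3) step.prems(4) by auto
    ultimately show False using leaves_ne[of b] by blast
  qed
  then have abS': "Node a b \<in> S'" using step.prems(6) by auto
  have IH: "csteps E S (insert a (insert b (S' - {Node a b})))"
    using step.IH[OF step.prems(1-5) abS' step.prems(7)] .
  have "a \<notin> S'" "b \<notin> S'" using Inv_child[OF I' abS'] by auto
  moreover have "a \<notin> ?S2" "b \<notin> ?S2" using Inv_child[OF I2 step.prems(6)] by auto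
  ultimately have neq: "x \<noteq> a" "x \<noteq> b" "y \<noteq> a" "y \<noteq> b" "x \<noteq> Node a b" "y \<noteq> Node a b"
    "Node x y \<noteq> a" "Node x y \<noteq> b"
    using step.hyps(2,3) abS' step.prems(6) by auto
  let ?T = "insert a (insert b (S' - {Node a b}))"
  have eqs: "insert a (insert b (?S2 - {Node a b})) = insert (Node x y) (?T - {x, y})"
    using neq nxy by auto
  have "x \<in> ?T" "y \<in> ?T" using step.hyps(2,3) neq by auto
  moreover have "(x, y) \<in> qrel E ?T" using step.hyps(4) \<open>x \<in> ?T\<close> \<open>y \<in> ?T\<close> by (auto simp: qrel_iff)
  moreover have "acyclic (qrel E (insert (Node x y) (?T - {x, y})))"
    using split_acyc[OF step.prems(6) step.prems(4) step.hyps(5) step.prems(7)] eqs by simp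
  ultimately have "csteps E S (insert (Node x y) (?T - {x, y}))"
    using csteps.step[OF IH] by blast
  then show ?case using eqs by simp
qed

primrec rep :: "'v btree \<Rightarrow> 'v btree \<Rightarrow> 'v btree \<Rightarrow> 'v btree" where
  "rep s s' (Leaf v) = (if Leaf v = s then s' else Leaf v)"
| "rep s s' (Node l r) = (if Node l r = s then s' else Node (rep s s' l) (rep s s' r))"
lemma rep_hit[simp]: "rep s s' s = s'"
  by (cases s) auto
lemma rep_Leaf[simp]: "Leaf v \<noteq> s \<Longrightarrow> rep s s' (Leaf v) = Leaf v"
  by simp
lemma rep_Node[simp]: "Node l r \<noteq> s \<Longrightarrow> rep s s' (Node l r) = Node (rep s s' l) (rep s s' r)"
  by simp
declare rep.simps[simp del]
lemma rep_leaves: "leaves s' = leaves s \<Longrightarrow> leaves (rep s s' u) = leaves u"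
proof (induction u)
  case (Leaf v) then show ?case by (cases "Leaf v = s") auto
next
  case (Node l r) then show ?case by (cases "Node l r = s") auto
qed
lemma rep_id: "s \<notin> subtrees u \<Longrightarrow> rep s s' u = u"
proof (induction u)
  case (Leaf v) then show ?case by auto
next
  case (Node l r) then show ?case by auto
qed

lemma cl_rep: "wft u \<Longrightarrow> s \<in> subtrees u \<Longrightarrow> leaves s' = leaves s \<Longrightarrow>
  clusters (rep s s' u) = (clusters u - clusters s) \<union> clusters s'"
proof (induction u)
  case (Leaf v) then have "s = Leaf v" by simp
  then show ?case by (metis Diff_cancel Un_empty_left rep_hit)
next
  case (Node l r)
  show ?case
  proof (cases "Node l r = s")
    case True then show ?thesis by (metis Diff_cancel Un_empty_left rep_hit)
  next
    case False
    have d: "leaves l \<inter> leaves r = {}" using Node.prems(1) by simp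
    have cs: "\<forall>X\<in>clusters s. X \<subseteq> leaves s \<and> X \<noteq> {}" using clusters_sub clusters_ne by blast
    have sl: "s \<in> subtrees l \<or> s \<in> subtrees r" using False Node.prems(2) by auto
    then show ?thesis
    proof
      assume sl: "s \<in> subtrees l"
      have ls: "leaves s \<subseteq> leaves l" using leaves_sub[OF sl] .
      have "s \<notin> subtrees r"
      proof
        assume "s \<in> subtrees r"
        then have "leaves s \<subseteq> leaves r" by (rule leaves_sub)
        then show False using ls d leaves_ne[of s] by blast
      qed
      then have rr: "rep s s' r = r" by (rule rep_id)
      have wl: "wft l" using Node.prems(1) by simp
      have IH: "clusters (rep s s' l) = (clusters l - clusters s) \<union> clusters s'"
        using Node.IH(1)[OF wl sl Node.prems(3)] .
      have n1: "leaves l \<union> leaves r \<notin> clusters s" using cs ls d leaves_ne[of r] by blast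
      have n2: "clusters r \<inter> clusters s = {}"
      proof (rule ccontr)
        assume "clusters r \<inter> clusters s \<noteq> {}"
        then obtain X where X: "X \<in> clusters r" "X \<in> clusters s" by blast
        then have "X \<subseteq> leaves r" "X \<subseteq> leaves s" "X \<noteq> {}" using clusters_sub clusters_ne by blast+
        then show False using ls d by blast
      qed
      have "rep s s' (Node l r) = Node (rep s s' l) r" using rep_Node[OF False] rr by simp
      then have "clusters (rep s s' (Node l r)) = insert (leaves l \<union> leaves r) (clusters (rep s s' l) \<union> clusters r)"
        using rep_leaves[OF Node.prems(3), of l] by simp
      also have "\<dots> = (clusters (Node l r) - clusters s) \<union> clusters s'"
        unfolding IH clusters.simps using n1 n2 by blast
      finally show ?thesis .
    next
      assume sr: "s \<in> subtrees r"
      have ls: "leaves s \<subseteq> leaves r" using leaves_sub[OF sr] .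
      have "s \<notin> subtrees l"
      proof
        assume "s \<in> subtrees l"
        then have "leaves s \<subseteq> leaves l" by (rule leaves_sub)
        then show False using ls d leaves_ne[of s] by blast
      qed
      then have rr: "rep s s' l = l" by (rule rep_id)
      have wr: "wft r" using Node.prems(1) by simp
      have IH: "clusters (rep s s' r) = (clusters r - clusters s) \<union> clusters s'"
        using Node.IH(2)[OF wr sr Node.prems(3)] .
      have n1: "leaves l \<union> leaves r \<notin> clusters s" using cs ls d leaves_ne[of l] by blast
      have n2: "clusters l \<inter> clusters s = {}"
      proof (rule ccontr)
        assume "clusters l \<inter> clusters s \<noteq> {}"
        then obtain X where X: "X \<in> clusters l" "X \<in> clusters s" by blast
        then have "X \<subseteq> leaves l" "X \<subseteq> leaves s" "X \<noteq> {}" using clusters_sub clusters_ne by blast+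
        then show False using ls d by blast
      qed
      have "rep s s' (Node l r) = Node l (rep s s' r)" using rep_Node[OF False] rr by simp
      then have "clusters (rep s s' (Node l r)) = insert (leaves l \<union> leaves r) (clusters l \<union> clusters (rep s s' r))"
        using rep_leaves[OF Node.prems(3), of r] by simp
      also have "\<dots> = (clusters (Node l r) - clusters s) \<union> clusters s'"
        unfolding IH clusters.simps using n1 n2 by blast
      finally show ?thesis .
    qed
  qed
qed

lemma replace:
  "csteps E X Y \<Longrightarrow> s \<in> X \<Longrightarrow> Inv X \<Longrightarrow> s = Node c d \<Longrightarrow> leaves s' = leaves s
   \<Longrightarrow> csteps E (rep s s' ` X) (rep s s' ` Y)"
proof (induction rule: csteps.induct)
  case (refl S) show ?case by (rule csteps.refl)
next
  case (step X Y' x y)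
  let ?f = "rep s s'"
  have lv: "\<forall>u. leaves (?f u) = leaves u" using rep_leaves[OF step.prems(4)] by blast
  have I': "Inv Y'" using csteps_Inv[OF step.hyps(1) step.prems(2)] .
  have xy: "x \<noteq> y" using step.hyps(4) by (simp add: qrel_iff)
  let ?Y = "insert (Node x y) (Y' - {x, y})"
  have I2: "Inv ?Y" using Inv_merge[OF I' step.hyps(2,3) xy] .
  have nxy: "Node x y \<noteq> s"
  proof
    assume eq: "Node x y = s"
    obtain w where w: "w \<in> Y'" "leaves s \<subseteq> leaves w" using csteps_mono[OF step.hyps(1) step.prems(1)] by blast
    have "x = w" using Inv_sub[OF I' step.hyps(2) w(1)] w(2) eq by auto
    then have "leaves y \<subseteq> leaves x" using w(2) eq by auto
    moreover have "leaves x \<inter> leaves y = {}" using Inv_overlap[OF I' step.hyps(2,3)] xy by auto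
    ultimately show False using leaves_ne[of y] by blast
  qed
  have inj': "inj_on ?f Y'" using Inv_inj[OF I'] lv by blast
  have inj2: "inj_on ?f ?Y" using Inv_inj[OF I2] lv by blast
  have fn: "?f (Node x y) = Node (?f x) (?f y)" using nxy by simp
  have img: "?f ` ?Y = insert (Node (?f x) (?f y)) (?f ` Y' - {?f x, ?f y})"
  proof -
    have "?f ` (Y' - {x, y}) = ?f ` Y' - ?f ` {x, y}"
      using inj_on_image_set_diff[OF inj'] step.hyps(2,3) by blast
    then show ?thesis using fn by auto
  qed
  have "?f x \<in> ?f ` Y'" "?f y \<in> ?f ` Y'" using step.hyps(2,3) by auto
  moreover have "?f x \<noteq> ?f y" using inj' step.hyps(2,3) xy unfolding inj_on_def by blast
  moreover have "(?f x, ?f y) \<in> qrel E (?f ` Y')"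
    using calculation step.hyps(4) lv by (auto simp: qrel_iff)
  moreover have "acyclic (qrel E (?f ` ?Y))"
    using acyc_map[OF inj2 _ step.hyps(5)] lv by blast
  ultimately show ?case using csteps.step[OF step.IH[OF step.prems]] img by metis
qed

definition good :: "'a set set \<Rightarrow> bool" where
  "good H \<longleftrightarrow> lamnr H \<and> (\<forall>X\<in>H. X \<noteq> {})
     \<and> (\<forall>X\<in>H. (\<exists>x1 x2. x1 \<in> X \<and> x2 \<in> X \<and> x1 \<noteq> x2) \<longrightarrow> (\<exists>Y Z. splt H X Y Z))
     \<and> (\<forall>X\<in>H. X \<noteq> \<Union>H \<longrightarrow> (\<exists>Q W. splt H Q X W))"

lemma good_clusters: "wft T \<Longrightarrow> good (clusters T)"
  unfolding good_def
proof (intro conjI ballI impI)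
  assume w: "wft T"
  show "lamnr (clusters T)" using laminar[OF w] .
  fix X assume X: "X \<in> clusters T"
  show "X \<noteq> {}" using clusters_ne[OF X] .
  {
    assume two: "\<exists>x1 x2. x1 \<in> X \<and> x2 \<in> X \<and> x1 \<noteq> x2"
    obtain x where x: "x \<in> subtrees T" "leaves x = X" using child_ex[OF X] by blast
    show "\<exists>Y Z. splt (clusters T) X Y Z"
    proof (cases x)
      case (Leaf v) then show ?thesis using x two by auto
    next
      case (Node y z)
      then show ?thesis using splt_node[OF w, of y z] x by auto
    qed
  }
  {
    assume "X \<noteq> \<Union>(clusters T)"
    then have "X \<noteq> leaves T" using Union_clusters by metis
    then obtain y z where yz: "Node y z \<in> subtrees T" "leaves y = X \<or> leaves z = X"
      using parent_ex[OF X] by blast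
    have s: "splt (clusters T) (leaves y \<union> leaves z) (leaves y) (leaves z)" using splt_node[OF w yz(1)] .
    show "\<exists>Q W. splt (clusters T) Q X W"
      using yz(2) s splt_sym[OF s] by blast
  }
qed

lemma parent_uniq: "lamnr t \<Longrightarrow> splt t P C D \<Longrightarrow> splt t Q C L \<Longrightarrow> P = Q \<and> D = L"
proof -
  assume l: "lamnr t" and a: "splt t P C D" and b: "splt t Q C L"
  have A: "P \<in> t" "C \<noteq> {}" "D \<noteq> {}" "C \<inter> D = {}" "P = C \<union> D" "\<forall>W\<in>t. W \<subset> P \<longrightarrow> W \<subseteq> C \<or> W \<subseteq> D"
    using a unfolding splt_def by auto
  have B: "Q \<in> t" "L \<noteq> {}" "C \<inter> L = {}" "Q = C \<union> L" "\<forall>W\<in>t. W \<subset> Q \<longrightarrow> W \<subseteq> C \<or> W \<subseteq> L"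
    using b unfolding splt_def by auto
  have "P \<subseteq> Q \<or> Q \<subseteq> P \<or> P \<inter> Q = {}" using l A(1) B(1) unfolding lamnr_def by blast
  moreover have "P \<inter> Q \<noteq> {}" using A(2,5) B(4) by blast
  moreover have "\<not> P \<subset> Q"
  proof
    assume "P \<subset> Q"
    then have "P \<subseteq> C \<or> P \<subseteq> L" using B(5) A(1) by blast
    then show False using A(2-5) B(3) by blast
  qed
  moreover have "\<not> Q \<subset> P"
  proof
    assume "Q \<subset> P"
    then have "Q \<subseteq> C \<or> Q \<subseteq> D" using A(6) B(1) by blast
    then show False using A(2-5) B(2-4) by blast
  qed
  ultimately have "P = Q" by blast
  then show ?thesis using A(4,5) B(3,4) by blast
qed

lemma child_part: "splt t C A B \<Longrightarrow> C = u \<union> w \<Longrightarrow> u \<inter> w = {} \<Longrightarrow> u \<in> t \<Longrightarrow> w \<in> t \<Longrightarrow> u \<noteq> {} \<Longrightarrow> w \<noteq> {}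
   \<Longrightarrow> u = A \<or> u = B"
proof -
  assume a: "splt t C A B" and c: "C = u \<union> w" "u \<inter> w = {}" "u \<in> t" "w \<in> t" "u \<noteq> {}" "w \<noteq> {}"
  have A: "A \<noteq> {}" "B \<noteq> {}" "A \<inter> B = {}" "C = A \<union> B" "\<forall>W\<in>t. W \<subset> C \<longrightarrow> W \<subseteq> A \<or> W \<subseteq> B"
    using a unfolding splt_def by auto
  have "u \<subset> C" "w \<subset> C" using c by blast+
  then have 1: "u \<subseteq> A \<or> u \<subseteq> B" "w \<subseteq> A \<or> w \<subseteq> B" using A(5) c(3,4) by blast+
  show ?thesis
  proof (cases "u \<subseteq> A")
    case True
    show ?thesis
    proof (cases "w \<subseteq> A")
      case True then show ?thesis using \<open>u \<subseteq> A\<close> A(1-4) c(1) by blast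
    next
      case False then have "w \<subseteq> B" using 1 by blast
      then show ?thesis using \<open>u \<subseteq> A\<close> A(1-4) c(1,2) by blast
    qed
  next
    case False then have uB: "u \<subseteq> B" using 1 by blast
    show ?thesis
    proof (cases "w \<subseteq> B")
      case True then show ?thesis using uB A(1-4) c(1) by blast
    next
      case False then have "w \<subseteq> A" using 1 by blast
      then show ?thesis using uB A(1-4) c(1,2) by blast
    qed
  qed
qed

lemma good_lam: "good H \<Longrightarrow> lamnr H" unfolding good_def by simp
lemma good_child: "good H \<Longrightarrow> X \<in> H \<Longrightarrow> x1 \<in> X \<Longrightarrow> x2 \<in> X \<Longrightarrow> x1 \<noteq> x2 \<Longrightarrow> \<exists>Y Z. splt H X Y Z"
  unfolding good_def by metis
lemma good_parent: "good H \<Longrightarrow> X \<in> H \<Longrightarrow> X \<noteq> \<Union>H \<Longrightarrow> \<exists>Q W. splt H Q X W"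
  unfolding good_def by metis
lemma splt_D: "splt H X Y Z \<Longrightarrow> X \<in> H \<and> Y \<in> H \<and> Z \<in> H \<and> Y \<noteq> {} \<and> Z \<noteq> {} \<and> Y \<inter> Z = {} \<and> X = Y \<union> Z"
  unfolding splt_def by blast
lemma splt_sub: "splt H X Y Z \<Longrightarrow> W \<in> H \<Longrightarrow> W \<subset> X \<Longrightarrow> W \<subseteq> Y \<or> W \<subseteq> Z"
  unfolding splt_def by simp

lemma shape:
  assumes gt: "good t" and gt': "good t'" and sC: "splt t C A B" and sP: "splt t P C D"
    and e: "e' \<in> t'" "x1 \<in> e'" "x2 \<in> e'" "x1 \<noteq> x2" "e' \<noteq> \<Union>t'"
    and eq: "t' - {e'} = t - {C}" and ne: "t' \<noteq> t"
  shows "(e' = A \<union> D \<or> e' = B \<union> D) \<and> t' = insert e' (t - {C})"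
proof -
  have lt: "lamnr t" and lt': "lamnr t'" using gt gt' good_lam by blast+
  have Ct: "C \<in> t" using splt_D[OF sC] by blast
  have ent: "e' \<notin> t"
  proof
    assume et: "e' \<in> t"
    show False
    proof (cases "e' = C")
      case True then have "t' = t" using eq e(1) Ct by blast
      then show False using ne by simp
    next
      case False then show False using eq et by blast
    qed
  qed
  have t'eq: "t' = insert e' (t - {C})" using eq e(1) by blast
  obtain lx ly where sx: "splt t' e' lx ly" using good_child[OF gt' e(1-4)] by blast
  obtain Q lw where sq: "splt t' Q e' lw" using good_parent[OF gt' e(1,5)] by blast
  have X: "lx \<in> t'" "ly \<in> t'" "lx \<noteq> {}" "ly \<noteq> {}" "lx \<inter> ly = {}" "e' = lx \<union> ly"
    using splt_D[OF sx] by auto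
  have W: "Q \<in> t'" "lw \<in> t'" "lw \<noteq> {}" "e' \<inter> lw = {}" "Q = e' \<union> lw"
    using splt_D[OF sq] by auto
  have "lx \<noteq> e'" "ly \<noteq> e'" "lw \<noteq> e'" "Q \<noteq> e'" using X W by blast+
  then have int: "lx \<in> t" "ly \<in> t" "lw \<in> t" "Q \<in> t" using X(1,2) W(1,2) t'eq by auto
  have "\<exists>x1 x2. x1 \<in> Q \<and> x2 \<in> Q \<and> x1 \<noteq> x2" using X(3,6) W(3,4,5) by blast
  then obtain M1 M2 where sm: "splt t Q M1 M2" using good_child[OF gt int(4)] by blast
  have "lw \<subset> Q" using W X by blast
  then have "lw \<subseteq> M1 \<or> lw \<subseteq> M2" using splt_sub[OF sm int(3)] by blast
  then obtain N1 N2 where sn: "splt t Q N1 N2" and lwN: "lw \<subseteq> N1" using sm splt_sym by blast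
  have N: "N1 \<noteq> {}" "N2 \<noteq> {}" "N1 \<inter> N2 = {}" "Q = N1 \<union> N2" "\<forall>W\<in>t. W \<subset> Q \<longrightarrow> W \<subseteq> N1 \<or> W \<subseteq> N2"
    "N1 \<in> t" "N2 \<in> t"
    using splt_D[OF sn] splt_sub[OF sn] by auto
  have "lx \<subset> Q" "ly \<subset> Q" using W X by blast+
  then have xy: "lx \<subseteq> N1 \<or> lx \<subseteq> N2" "ly \<subseteq> N1 \<or> ly \<subseteq> N2" using N(5) int(1,2) by blast+
  have "\<exists>u v. ((u = lx \<and> v = ly) \<or> (u = ly \<and> v = lx)) \<and> N1 = u \<union> lw \<and> N2 = v"
  proof (cases "lx \<subseteq> N1")
    case True
    show ?thesis
    proof (cases "ly \<subseteq> N1")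
      case True
      then have "Q \<subseteq> N1" using \<open>lx \<subseteq> N1\<close> lwN W(5) X(6) by blast
      then show ?thesis using N(2,3,4) by blast
    next
      case False
      then have "ly \<subseteq> N2" using xy by blast
      then have "N1 = lx \<union> lw \<and> N2 = ly" using \<open>lx \<subseteq> N1\<close> lwN N(3,4) W(4,5) X(5,6) by blast
      then show ?thesis by blast
    qed
  next
    case False
    then have xN2: "lx \<subseteq> N2" using xy by blast
    show ?thesis
    proof (cases "ly \<subseteq> N1")
      case True
      then have "N1 = ly \<union> lw \<and> N2 = lx" using xN2 lwN N(3,4) W(4,5) X(5,6) by blast
      then show ?thesis by blast
    next
      case False
      then have "ly \<subseteq> N2" using xy by blast
      then have "N2 = e'" using xN2 lwN N(3,4) W(4,5) X(5,6) by blast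
      then show ?thesis using N(7) ent by blast
    qed
  qed
  then obtain u v where uv: "(u = lx \<and> v = ly) \<or> (u = ly \<and> v = lx)" "N1 = u \<union> lw" "N2 = v" by blast
  have "N1 = C"
  proof (rule ccontr)
    assume "N1 \<noteq> C"
    then have "N1 \<in> t'" using N(6) t'eq by blast
    then have L: "N1 \<subseteq> e' \<or> e' \<subseteq> N1 \<or> N1 \<inter> e' = {}" using lt' e(1) unfolding lamnr_def by blast
    have u1: "u \<subseteq> e'" "v \<subseteq> e'" "u \<noteq> {}" "v \<noteq> {}" "u \<inter> v = {}" using uv(1) X(3-6) by blast+
    have "\<not> N1 \<subseteq> e'" using uv(2) W(3,4) by blast
    moreover have "\<not> e' \<subseteq> N1" using uv(2) u1 W(4) X(6) uv(1) by blast
    moreover have "N1 \<inter> e' \<noteq> {}" using uv(2) u1 by blast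
    ultimately show False using L by blast
  qed
  then have sQ: "splt t Q C v" using sn uv(3) by simp
  have "P = Q \<and> D = v" using parent_uniq[OF lt sP sQ] .
  moreover have "u = A \<or> u = B"
  proof (rule child_part[OF sC])
    show "C = u \<union> lw" using \<open>N1 = C\<close> uv(2) by simp
    show "u \<inter> lw = {}" using uv(1) X(6) W(4) by blast
    show "u \<in> t" using uv(1) int(1,2) by blast
    show "lw \<in> t" using int(3) .
    show "u \<noteq> {}" using uv(1) X(3,4) by blast
    show "lw \<noteq> {}" using W(3) .
  qed
  moreover have "e' = u \<union> v" using uv(1) X(6) by blast
  ultimately show ?thesis using t'eq by blast
qed

definition ow :: "('v \<Rightarrow> 'v \<Rightarrow> bool) \<Rightarrow> 'v set \<Rightarrow> 'v set \<Rightarrow> bool" where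
  "ow E Y Z \<longleftrightarrow> (ed E Y Z \<or> ed E Z Y) \<and> \<not> (ed E Y Z \<and> ed E Z Y)"

lemma ow_sym: "ow E Y Z \<Longrightarrow> ow E Z Y"
  unfolding ow_def by blast

lemma splt_I: "X \<in> H \<Longrightarrow> Y \<in> H \<Longrightarrow> Z \<in> H \<Longrightarrow> Y \<noteq> {} \<Longrightarrow> Z \<noteq> {} \<Longrightarrow> Y \<inter> Z = {} \<Longrightarrow> X = Y \<union> Z
  \<Longrightarrow> (\<And>W. W \<in> H \<Longrightarrow> W \<subset> X \<Longrightarrow> W \<subseteq> Y \<or> W \<subseteq> Z) \<Longrightarrow> splt H X Y Z"
  unfolding splt_def by blast

lemma tourn: "ow E A B \<Longrightarrow> ow E (A \<union> B) D \<Longrightarrow> ow E A D \<Longrightarrow> ow E (A \<union> D) B \<Longrightarrow> ow E B D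
  \<Longrightarrow> ow E (B \<union> D) A \<Longrightarrow> False"
  unfolding ow_def ed_Un1 ed_Un2 by blast

lemma alt_splits:
  assumes l: "lamnr t" and sC: "splt t C A B" and sP: "splt t P C D"
  shows "splt (insert (A \<union> D) (t - {C})) (A \<union> D) A D \<and> splt (insert (A \<union> D) (t - {C})) P (A \<union> D) B"
proof -
  have a: "C \<in> t" "A \<in> t" "B \<in> t" "A \<noteq> {}" "B \<noteq> {}" "A \<inter> B = {}" "C = A \<union> B" using splt_D[OF sC] by auto
  have b: "P \<in> t" "D \<in> t" "C \<noteq> {}" "D \<noteq> {}" "C \<inter> D = {}" "P = C \<union> D" using splt_D[OF sP] by auto
  let ?t = "insert (A \<union> D) (t - {C})"
  have ne: "A \<noteq> C" "B \<noteq> C" "D \<noteq> C" "P \<noteq> C" using a b by blast+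
  have 1: "splt ?t (A \<union> D) A D"
  proof (rule splt_I)
    fix W assume W: "W \<in> ?t" "W \<subset> A \<union> D"
    then have Wt: "W \<in> t" by auto
    have "W \<subseteq> C \<or> C \<subseteq> W \<or> W \<inter> C = {}" using lamnr_D[OF l Wt a(1)] .
    moreover have "\<not> C \<subseteq> W" using W(2) a(5,6,7) b(5) by blast
    ultimately show "W \<subseteq> A \<or> W \<subseteq> D" using W(2) a(7) b(5) by blast
  qed (use a b ne in blast)+
  have 2: "splt ?t P (A \<union> D) B"
  proof (rule splt_I)
    fix W assume W: "W \<in> ?t" "W \<subset> P"
    show "W \<subseteq> A \<union> D \<or> W \<subseteq> B"
    proof (cases "W = A \<union> D")
      case True then show ?thesis by simp
    next
      case False
      then have Wt: "W \<in> t" "W \<noteq> C" using W(1) by auto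
      have "W \<subseteq> C \<or> W \<subseteq> D" using splt_sub[OF sP Wt(1) W(2)] .
      then show ?thesis
      proof
        assume "W \<subseteq> C"
        then have "W \<subset> C" using Wt(2) by blast
        then have "W \<subseteq> A \<or> W \<subseteq> B" using splt_sub[OF sC Wt(1)] by blast
        then show ?thesis by blast
      qed blast
    qed
  qed (use a b ne in blast)+
  show ?thesis using 1 2 by blast
qed

lemma new_notin:
  assumes l: "lamnr t" and sC: "splt t C A B" and sP: "splt t P C D"
  shows "A \<union> D \<notin> t"
proof
  assume N: "A \<union> D \<in> t"
  have a: "C \<in> t" "A \<noteq> {}" "B \<noteq> {}" "A \<inter> B = {}" "C = A \<union> B" using splt_D[OF sC] by auto
  have b: "D \<noteq> {}" "C \<inter> D = {}" using splt_D[OF sP] by auto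
  have L: "A \<union> D \<subseteq> C \<or> C \<subseteq> A \<union> D \<or> (A \<union> D) \<inter> C = {}" using lamnr_D[OF l N a(1)] .
  have "\<not> A \<union> D \<subseteq> C" using b by blast
  moreover have "\<not> C \<subseteq> A \<union> D" using a(3,4,5) b(2) by blast
  moreover have "(A \<union> D) \<inter> C \<noteq> {}" using a(2,5) by blast
  ultimately show False using L by blast
qed

lemma Inv_leaves: "Inv (Leaf ` V)"
  unfolding Inv_def by auto

lemma acyc_pair: "acyclic r \<Longrightarrow> (x, y) \<in> r \<Longrightarrow> (y, x) \<notin> r"
  unfolding acyclic_def by (meson trancl.r_into_trancl trancl_into_trancl)

lemma oneway:
  assumes cs: "csteps E (Leaf ` V) {T}" and ac: "acyclic (qrel E (Leaf ` V))"
    and sp: "splt (clusters T) X Y Z"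
  shows "ow E Y Z"
proof -
  have IT: "Inv {T}" using csteps_Inv[OF cs Inv_leaves] .
  have w: "wft T" using Inv_wft[OF IT] by simp
  have sd: "X \<in> clusters T" "Y \<noteq> {}" "Z \<noteq> {}" "Y \<inter> Z = {}" "X = Y \<union> Z" using splt_D[OF sp] by auto
  obtain x where x: "x \<in> subtrees T" "leaves x = X" using child_ex[OF sd(1)] by blast
  obtain y z where xyz: "x = Node y z"
  proof (cases x)
    case (Leaf v)
    then have "X = {v}" using x by simp
    then have "Y \<union> Z = {v}" using sd(5) by simp
    then show ?thesis using sd(2,3,4) by (simp add: Un_singleton_iff)
  qed
  have sp2: "splt (clusters T) X (leaves y) (leaves z)" using splt_node[OF w, of y z] x xyz by simp
  have nl: "\<forall>u\<in>Leaf ` V. Node y z \<notin> subtrees u" by auto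
  obtain S where S: "csteps E (Leaf ` V) S" "(y, z) \<in> qrel E S"
    using form[OF cs _ _ nl, of T] x xyz by blast
  have acS: "acyclic (qrel E S)" using csteps_acyc[OF S(1) ac] .
  have "(z, y) \<notin> qrel E S" using acyc_pair[OF acS S(2)] .
  then have "\<not> ed E (leaves z) (leaves y)" using S(2) by (auto simp: qrel_iff)
  moreover have "ed E (leaves y) (leaves z)" using S(2) by (simp add: qrel_iff)
  ultimately have "ow E (leaves y) (leaves z)" unfolding ow_def by blast
  then show ?thesis using splt_uniq[OF sp sp2] ow_sym by metis
qed

lemma init_acyc:
  assumes "acyclic (thick_rel Gam sig lam inp)"
  shows "acyclic (qrel (thick Gam sig inp) (Leaf ` lam))"
proof -
  let ?E = "thick Gam sig inp"
  have edge: "\<exists>v w. x = Leaf v \<and> y = Leaf w \<and> (v, w) \<in> thick_rel Gam sig lam inp"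
    if "(x, y) \<in> qrel ?E (Leaf ` lam)" for x y
    using that unfolding qrel_def thick_rel_def by auto
  have main: "(x, y) \<in> (qrel ?E (Leaf ` lam))\<^sup>+ \<Longrightarrow> \<exists>v w. x = Leaf v \<and> y = Leaf w \<and> (v, w) \<in> (thick_rel Gam sig lam inp)\<^sup>+" for x y
  proof (induction rule: trancl_induct)
    case (base y) then show ?case using edge by blast
  next
    case (step y z)
    then obtain v w where 1: "x = Leaf v" "y = Leaf w" "(v, w) \<in> (thick_rel Gam sig lam inp)\<^sup>+" by blast
    obtain w' u where 2: "y = Leaf w'" "z = Leaf u" "(w', u) \<in> thick_rel Gam sig lam inp" using edge step.hyps(2) by blast
    have "w' = w" using 1 2 by simp
    then have "(v, u) \<in> (thick_rel Gam sig lam inp)\<^sup>+" using 1(3) 2(3) by (meson trancl_into_trancl)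
    then show ?case using 1 2 by blast
  qed
  show ?thesis unfolding acyclic_def
  proof
    fix x show "(x, x) \<notin> (qrel ?E (Leaf ` lam))\<^sup>+"
    proof
      assume "(x, x) \<in> (qrel ?E (Leaf ` lam))\<^sup>+"
      then obtain v w where "x = Leaf v" "x = Leaf w" "(v, w) \<in> (thick_rel Gam sig lam inp)\<^sup>+" using main by blast
      then show False using assms unfolding acyclic_def by auto
    qed
  qed
qed

lemma gen:
  assumes I: "Inv W" and xyz: "x \<in> W" "y \<in> W" "z \<in> W" "x \<noteq> y" "x \<noteq> z" "y \<noteq> z"
    and exy: "ed E (leaves x) (leaves y)"
    and pq: "(p = Node x y \<and> q = z) \<or> (p = z \<and> q = Node x y)"
    and epq: "ed E (leaves p) (leaves q)" and nqp: "\<not> ed E (leaves q) (leaves p)"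
    and ac: "acyclic (qrel E (insert (Node p q) (W - {x, y, z})))"
  shows "csteps E W (insert (Node p q) (W - {x, y, z}))"
proof -
  let ?m = "Node x y"
  let ?F = "insert (Node p q) (W - {x, y, z})"
  let ?W1 = "insert ?m (W - {x, y})"
  have mW: "?m \<notin> W" using Inv_child[OF I] xyz(1) by blast
  have lx: "leaves x \<subseteq> leaves (Node p q)" using pq by auto
  have "Node p q \<noteq> x" using pq by auto
  then have nW: "Node p q \<notin> W" using Inv_sub[OF I xyz(1) _ lx] by blast
  have pq': "p \<noteq> q" using pq mW xyz(3) by auto
  have eq1: "insert p (insert q (?F - {Node p q})) = ?W1" using pq nW xyz by auto
  have ac1: "acyclic (qrel E ?W1)"
    using split_acyc[of p q ?F E] pq' ac nqp eq1 by simp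
  have s1: "csteps E W ?W1"
    using csteps.step[OF csteps.refl xyz(1,2)] xyz(4) exy ac1 xyz(1,2) by (simp add: qrel_iff)
  have inW1: "p \<in> ?W1" "q \<in> ?W1" using pq xyz by auto
  have eq2: "insert (Node p q) (?W1 - {p, q}) = ?F" using pq mW xyz by auto
  have "(p, q) \<in> qrel E ?W1" using inW1 pq' epq by (simp add: qrel_iff)
  then have "csteps E W (insert (Node p q) (?W1 - {p, q}))"
    using csteps.step[OF s1 inW1] ac eq2 by simp
  then show ?thesis using eq2 by simp
qed

lemma subtrees_trans: "x \<in> subtrees u \<Longrightarrow> subtrees x \<subseteq> subtrees u"
  by (induction u) auto

lemma two_elems: "2 \<le> card X \<Longrightarrow> \<exists>x1 x2. x1 \<in> X \<and> x2 \<in> X \<and> x1 \<noteq> x2"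
proof (rule ccontr)
  assume c: "2 \<le> card X" and n: "\<not> (\<exists>x1 x2. x1 \<in> X \<and> x2 \<in> X \<and> x1 \<noteq> x2)"
  have "finite X" using c by (metis card.infinite not_numeral_le_zero)
  then have "card X \<le> Suc 0" using n card_le_Suc0_iff_eq by blast
  then show False using c by simp
qed

lemma card_two: "finite X \<Longrightarrow> finite Y \<Longrightarrow> X \<noteq> {} \<Longrightarrow> Y \<noteq> {} \<Longrightarrow> X \<inter> Y = {} \<Longrightarrow> 2 \<le> card (X \<union> Y)"
proof -
  assume a: "finite X" "finite Y" "X \<noteq> {}" "Y \<noteq> {}" "X \<inter> Y = {}"
  have "card (X \<union> Y) = card X + card Y" using card_Un_disjoint a by blast
  moreover have "card X \<ge> 1" "card Y \<ge> 1" using a by (simp_all add: Suc_leI card_gt_0_iff)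
  ultimately show ?thesis by simp
qed

lemma TG_good: "t \<in> T_G Gam sig lam inp \<Longrightarrow> good t"
proof -
  assume "t \<in> T_G Gam sig lam inp"
  then obtain T where "t = clusters T" "csteps (thick Gam sig inp) (Leaf ` lam) {T}" unfolding T_G_def by blast
  moreover have "wft T" using Inv_wft[OF csteps_Inv[OF calculation(2) Inv_leaves]] by simp
  ultimately show ?thesis using good_clusters by blast
qed

lemma TG_ow: "acyclic (qrel (thick Gam sig inp) (Leaf ` lam)) \<Longrightarrow> t \<in> T_G Gam sig lam inp \<Longrightarrow> splt t X Y Z
  \<Longrightarrow> ow (thick Gam sig inp) Y Z"
proof -
  assume ac: "acyclic (qrel (thick Gam sig inp) (Leaf ` lam))" and "t \<in> T_G Gam sig lam inp" and sp: "splt t X Y Z"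
  then obtain T where "t = clusters T" "csteps (thick Gam sig inp) (Leaf ` lam) {T}" unfolding T_G_def by blast
  then show ?thesis using oneway[OF _ ac, of T X Y Z] sp by blast
qed

lemma existence:
  fixes E :: "'v \<Rightarrow> 'v \<Rightarrow> bool"
  assumes cs: "csteps E (Leaf ` V) {T}" and ac0: "acyclic (qrel E (Leaf ` V))"
    and sT: "s \<in> subtrees T" and sh: "s = Node (Node a b) d \<or> s = Node d (Node a b)"
  shows "\<exists>s' N. leaves s' = leaves s
     \<and> clusters s' = insert (leaves s) (insert N (clusters a \<union> clusters b \<union> clusters d))
     \<and> (N = leaves a \<union> leaves d \<or> N = leaves b \<union> leaves d)
     \<and> csteps E (Leaf ` V) {rep s s' T}"
proof -
  define c where "c = Node a b"
  let ?S0 = "Leaf ` V"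
  have I0: "Inv ?S0" by (rule Inv_leaves)
  have nls: "\<forall>u\<in>?S0. s \<notin> subtrees u" using sh by auto
  have nlc: "\<forall>u\<in>?S0. Node a b \<notin> subtrees u" by auto
  have shc: "s = Node c d \<or> s = Node d c" using sh c_def by simp
  obtain S' where S': "csteps E ?S0 S'" "c \<in> S'" "d \<in> S'" "c \<noteq> d"
    "acyclic (qrel E (insert s (S' - {c, d})))" "csteps E (insert s (S' - {c, d})) {T}"
    and dir: "(s = Node c d \<and> ed E (leaves c) (leaves d) \<and> \<not> ed E (leaves d) (leaves c))
       \<or> (s = Node d c \<and> ed E (leaves d) (leaves c) \<and> \<not> ed E (leaves c) (leaves d))"
  proof (cases "s = Node c d")
    case True
    obtain S where S: "csteps E ?S0 S" "c \<in> S" "d \<in> S" "(c, d) \<in> qrel E S"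
      "acyclic (qrel E (insert (Node c d) (S - {c, d})))" "csteps E (insert (Node c d) (S - {c, d})) {T}"
      using form[OF cs _ _ , of T c d] sT True nls by auto
    have "(d, c) \<notin> qrel E S" using acyc_pair[OF csteps_acyc[OF S(1) ac0] S(4)] .
    then have "\<not> ed E (leaves d) (leaves c)" using S(2,3,4) by (auto simp: qrel_iff)
    moreover have "ed E (leaves c) (leaves d)" "c \<noteq> d" using S(4) by (auto simp: qrel_iff)
    ultimately show ?thesis using that[of S] S True by blast
  next
    case False
    then have sdc: "s = Node d c" using shc by blast
    obtain S where S: "csteps E ?S0 S" "d \<in> S" "c \<in> S" "(d, c) \<in> qrel E S"
      "acyclic (qrel E (insert (Node d c) (S - {d, c})))" "csteps E (insert (Node d c) (S - {d, c})) {T}"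
      using form[OF cs _ _ , of T d c] sT sdc nls by auto
    have "(c, d) \<notin> qrel E S" using acyc_pair[OF csteps_acyc[OF S(1) ac0] S(4)] .
    then have "\<not> ed E (leaves c) (leaves d)" using S(2,3,4) by (auto simp: qrel_iff)
    moreover have "ed E (leaves d) (leaves c)" "c \<noteq> d" using S(4) by (auto simp: qrel_iff)
    moreover have "{d, c} = {c, d}" by auto
    ultimately show ?thesis using that[of S] S sdc by auto
  qed
  obtain S where S: "csteps E ?S0 S" "a \<in> S" "b \<in> S" "(a, b) \<in> qrel E S"
      "csteps E (insert (Node a b) (S - {a, b})) S'"
    using form[OF S'(1) S'(2), of a b] c_def nlc by auto
  have IS: "Inv S" using csteps_Inv[OF S(1) I0] .
  have acS: "acyclic (qrel E S)" using csteps_acyc[OF S(1) ac0] .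
  have ab: "a \<noteq> b" and eab: "ed E (leaves a) (leaves b)" using S(4) by (auto simp: qrel_iff)
  have nba: "\<not> ed E (leaves b) (leaves a)"
    using acyc_pair[OF acS S(4)] S(2,3) ab by (auto simp: qrel_iff)
  define W where "W = insert a (insert b (S' - {c}))"
  have nabS': "Node a b \<in> S'" using S'(2) c_def by simp
  have csW: "csteps E S W"
    using delay[OF S(5) HOL.refl S(2,3) ab IS nabS' nba] unfolding W_def c_def .
  have csW0: "csteps E ?S0 W" using csteps_trans[OF csW S(1)] .
  have IW: "Inv W" using csteps_Inv[OF csW0 I0] .
  have IS': "Inv S'" using csteps_Inv[OF S'(1) I0] .
  have abS': "a \<notin> S'" "b \<notin> S'" using Inv_child[OF IS' nabS'] by auto
  define S'' where "S'' = insert s (S' - {c, d})"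
  have IS'': "Inv S''"
  proof -
    have "Inv (insert (Node c d) (S' - {c, d}))" "Inv (insert (Node d c) (S' - {d, c}))"
      using Inv_merge[OF IS' S'(2,3,4)] Inv_merge[OF IS' S'(3,2)] S'(4) by auto
    moreover have "{d, c} = {c, d}" by auto
    ultimately show ?thesis using shc S''_def by auto
  qed
  have acS'': "acyclic (qrel E S'')" using S'(5) S''_def by simp
  have Wd: "W - {a, b, d} = S' - {c, d}" using W_def abS' by auto
  have lcs: "leaves c \<subseteq> leaves s" using shc by auto
  have repid: "rep s s' u = u" if "u \<in> S' - {c, d}" for s' u
  proof (rule rep_id)
    show "s \<notin> subtrees u"
    proof
      assume "s \<in> subtrees u"
      then have "leaves c \<subseteq> leaves u" using leaves_sub lcs by blast
      then have "c = u" using Inv_sub[OF IS' S'(2)] that by blast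
      then show False using that by blast
    qed
  qed
  have REPL: "rep s s' ` S'' = insert s' (W - {a, b, d}) \<and> acyclic (qrel E (insert s' (W - {a, b, d})))"
    if ls: "leaves s' = leaves s" for s'
  proof -
    have "rep s s' ` S'' = insert s' (S' - {c, d})"
    proof -
      have "rep s s' ` (S' - {c, d}) = S' - {c, d}" using repid by (metis image_cong image_ident)
      then show ?thesis unfolding S''_def by simp
    qed
    moreover have "acyclic (qrel E (rep s s' ` S''))"
    proof (rule acyc_map[OF _ _ acS''])
      show "\<forall>u\<in>S''. leaves (rep s s' u) = leaves u" using rep_leaves[OF ls] by blast
      then show "inj_on (rep s s') S''" using Inv_inj[OF IS''] by blast
    qed
    ultimately show ?thesis using Wd by simp
  qed
  have inW: "a \<in> W" "b \<in> W" "d \<in> W" using W_def S'(3,4) by auto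
  have dist: "a \<noteq> b" "a \<noteq> d" "b \<noteq> d" using ab abS' S'(3) by auto
  have lc: "leaves c = leaves a \<union> leaves b" using c_def by simp
  have ord: "{b, d, a} = {a, b, d}" "{a, d, b} = {a, b, d}" "{d, a, b} = {a, b, d}" "{d, b, a} = {a, b, d}" by auto
  have "\<exists>s' N. leaves s' = leaves s
     \<and> clusters s' = insert (leaves s) (insert N (clusters a \<union> clusters b \<union> clusters d))
     \<and> (N = leaves a \<union> leaves d \<or> N = leaves b \<union> leaves d)
     \<and> csteps E W (insert s' (W - {a, b, d}))"
  proof (cases "s = Node c d")
    case True
    then have e1: "ed E (leaves a) (leaves d) \<or> ed E (leaves b) (leaves d)"
      "\<not> ed E (leaves d) (leaves a)" "\<not> ed E (leaves d) (leaves b)"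
      using dir S'(4) lc by auto
    show ?thesis
    proof (cases "ed E (leaves b) (leaves d)")
      case True
      define s' where "s' = Node a (Node b d)"
      have ls: "leaves s' = leaves s" using \<open>s = Node c d\<close> s'_def c_def by auto
      have "csteps E W (insert (Node a (Node b d)) (W - {b, d, a}))"
        using gen[OF IW inW(2,3,1) dist(3) dist(1)[symmetric] dist(2)[symmetric] True, of a "Node b d"]
          REPL[OF ls] s'_def ord eab nba e1 by auto
      then show ?thesis using ls s'_def ord \<open>s = Node c d\<close> c_def
        by (intro exI[of _ s'] exI[of _ "leaves b \<union> leaves d"]) auto
    next
      case False
      then have ead: "ed E (leaves a) (leaves d)" using e1 by blast
      define s' where "s' = Node (Node a d) b"
      have ls: "leaves s' = leaves s" using \<open>s = Node c d\<close> s'_def c_def by auto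
      have "csteps E W (insert (Node (Node a d) b) (W - {a, d, b}))"
        using gen[OF IW inW(1,3,2) dist(2) dist(1) dist(3)[symmetric] ead, of "Node a d" b]
          REPL[OF ls] s'_def ord eab nba False by auto
      then show ?thesis using ls s'_def ord \<open>s = Node c d\<close> c_def
        by (intro exI[of _ s'] exI[of _ "leaves a \<union> leaves d"]) auto
    qed
  next
    case False
    then have sdc: "s = Node d c" using shc by blast
    then have e1: "ed E (leaves d) (leaves a) \<or> ed E (leaves d) (leaves b)"
      "\<not> ed E (leaves a) (leaves d)" "\<not> ed E (leaves b) (leaves d)"
      using dir S'(4) lc False by auto
    show ?thesis
    proof (cases "ed E (leaves d) (leaves a)")
      case True
      define s' where "s' = Node (Node d a) b"
      have ls: "leaves s' = leaves s" using sdc s'_def c_def by auto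
      have "csteps E W (insert (Node (Node d a) b) (W - {d, a, b}))"
        using gen[OF IW inW(3,1,2) dist(2)[symmetric] dist(3)[symmetric] dist(1) True, of "Node d a" b]
          REPL[OF ls] s'_def ord eab nba e1 by auto
      then show ?thesis using ls s'_def ord sdc c_def
        by (intro exI[of _ s'] exI[of _ "leaves a \<union> leaves d"]) auto
    next
      case False
      then have edb: "ed E (leaves d) (leaves b)" using e1 by blast
      define s' where "s' = Node a (Node d b)"
      have ls: "leaves s' = leaves s" using sdc s'_def c_def by auto
      have "csteps E W (insert (Node a (Node d b)) (W - {d, b, a}))"
        using gen[OF IW inW(3,2,1) dist(3)[symmetric] dist(2)[symmetric] dist(1)[symmetric] edb, of a "Node d b"]
          REPL[OF ls] s'_def ord eab nba False by auto
      then show ?thesis using ls s'_def ord sdc c_def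
        by (intro exI[of _ s'] exI[of _ "leaves b \<union> leaves d"]) auto
    qed
  qed
  then obtain s' N where sN: "leaves s' = leaves s"
     "clusters s' = insert (leaves s) (insert N (clusters a \<union> clusters b \<union> clusters d))"
     "N = leaves a \<union> leaves d \<or> N = leaves b \<union> leaves d"
     "csteps E W (insert s' (W - {a, b, d}))" by blast
  have c1: "csteps E ?S0 (rep s s' ` S'')" using csteps_trans[OF sN(4) csW0] REPL[OF sN(1)] by simp
  have "s \<in> S''" using S''_def by simp
  then have c2: "csteps E (rep s s' ` S'') (rep s s' ` {T})"
    using replace[OF S'(6)[folded S''_def] _ IS'' _ sN(1)] shc by blast
  have "csteps E ?S0 {rep s s' T}" using csteps_trans[OF c2 c1] by simp
  then show ?thesis using sN by blast
qed

lemma set_alg: "insert P (insert e K) \<subseteq> t \<Longrightarrow> e \<notin> K \<Longrightarrow> e \<noteq> P \<Longrightarrow>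
  (t - insert P (insert e K)) \<union> insert P (insert N K) = insert N (t - {e})"
  by auto

theorem lemma1:
  assumes "graph_G Gam sig lam inp ilab olab"
    and "t \<in> T_G Gam sig lam inp"
    and "internal_edge t e"
  shows "\<exists>!(t', e'). t' \<in> T_G Gam sig lam inp \<and> t' \<noteq> t \<and> internal_edge t' e'
                    \<and> contract_edge t e = contract_edge t' e'"
proof -
  let ?E = "thick Gam sig inp"
  let ?S0 = "Leaf ` lam"
  have ac0: "acyclic (qrel ?E ?S0)" using init_acyc assms(1) unfolding graph_G_def by blast
  obtain T where tdef: "t = clusters T" and cs: "csteps ?E ?S0 {T}" using assms(2) unfolding T_G_def by blast
  have wT: "wft T" using Inv_wft[OF csteps_Inv[OF cs Inv_leaves]] by simp
  have gt: "good t" using TG_good[OF assms(2)] .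
  have lt: "lamnr t" using good_lam[OF gt] .
  have C: "e \<in> clusters T" "2 \<le> card e" "e \<noteq> \<Union>(clusters T)"
    using assms(3) tdef unfolding internal_edge_def by auto
  then have C3: "e \<noteq> leaves T" using Union_clusters by metis
  obtain y z where yz: "Node y z \<in> subtrees T" "leaves y = e \<or> leaves z = e" using parent_ex[OF C(1) C3] by blast
  obtain c d s where cds: "s \<in> subtrees T" "s = Node c d \<or> s = Node d c" "leaves c = e"
    using yz by blast
  obtain a b where cab: "c = Node a b"
  proof (cases c)
    case (Leaf v) then have "e = {v}" using cds by simp
    then show ?thesis using C(2) by simp
  qed
  have sh: "s = Node (Node a b) d \<or> s = Node d (Node a b)" using cds(2) cab by simp
  let ?A = "leaves a" and ?B = "leaves b" and ?D = "leaves d"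
  have csub: "Node a b \<in> subtrees T" using cds(1) sh subtrees_trans by fastforce
  have sC: "splt t e ?A ?B" using splt_node[OF wT csub] tdef cds(3) cab by simp
  have sP: "splt t (e \<union> ?D) e ?D"
  proof (cases "s = Node c d")
    case True then show ?thesis using splt_node[OF wT, of c d] cds tdef by simp
  next
    case False then have "s = Node d c" using cds(2) by blast
    then have "splt t (?D \<union> e) ?D e" using splt_node[OF wT, of d c] cds tdef by simp
    then show ?thesis using splt_sym by (metis Un_commute)
  qed
  have sd: "?A \<noteq> {}" "?B \<noteq> {}" "?D \<noteq> {}" "?A \<inter> ?B = {}" "e \<inter> ?D = {}" "e = ?A \<union> ?B"
    using splt_D[OF sC] splt_D[OF sP] by auto
  have ls: "leaves s = ?A \<union> ?B \<union> ?D" using sh by auto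
  obtain s' N where sN: "leaves s' = leaves s"
     "clusters s' = insert (leaves s) (insert N (clusters a \<union> clusters b \<union> clusters d))"
     "N = ?A \<union> ?D \<or> N = ?B \<union> ?D"
     "csteps ?E ?S0 {rep s s' T}"
    using existence[OF cs ac0 cds(1) sh] by blast
  define t' where "t' = clusters (rep s s' T)"
  have t'TG: "t' \<in> T_G Gam sig lam inp" using sN(4) t'_def unfolding T_G_def by blast
  have cl_s: "clusters s = insert (leaves s) (insert e (clusters a \<union> clusters b \<union> clusters d))"
    using sh cds(3) cab by auto
  have K: "e \<notin> clusters a" "e \<notin> clusters b" "e \<notin> clusters d" "e \<noteq> leaves s"
  proof -
    show "e \<notin> clusters a" using clusters_sub[of e a] sd by blast
    show "e \<notin> clusters b" using clusters_sub[of e b] sd by blast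
    show "e \<notin> clusters d" using clusters_sub[of e d] sd by blast
    show "e \<noteq> leaves s" using ls sd by blast
  qed
  have cs_t: "clusters s \<subseteq> t" using clusters_subtree[OF cds(1)] tdef by simp
  have t'eq: "t' = insert N (t - {e})"
  proof -
    have "t' = (t - clusters s) \<union> clusters s'" using cl_rep[OF wT cds(1) sN(1)] t'_def tdef by simp
    moreover have "e \<notin> clusters a \<union> clusters b \<union> clusters d" using K by blast
    ultimately show ?thesis using set_alg[of "leaves s" e "clusters a \<union> clusters b \<union> clusters d" t N] sN(2) cl_s K(4) cs_t
      by simp
  qed
  have Nt: "N \<notin> t" using sN(3) new_notin[OF lt sC sP] new_notin[OF lt splt_sym[OF sC] sP] by blast
  have uni: "\<Union>t' = leaves T"
    using Union_clusters[of "rep s s' T"] rep_leaves[OF sN(1)] t'_def by simp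
  have eT: "e \<subseteq> leaves T" using clusters_sub[OF C(1)] .
  have ie': "internal_edge t' N"
    unfolding internal_edge_def
  proof (intro conjI)
    show "N \<in> t'" using t'eq by simp
    have AD: "?A \<inter> ?D = {}" "?B \<inter> ?D = {}" using sd(5,6) by blast+
    show "2 \<le> card N"
    proof (cases "N = ?A \<union> ?D")
      case True then show ?thesis using card_two[OF leaves_fin leaves_fin sd(1) sd(3) AD(1)] by simp
    next
      case False then have "N = ?B \<union> ?D" using sN(3) by blast
      then show ?thesis using card_two[OF leaves_fin leaves_fin sd(2) sd(3) AD(2)] by simp
    qed
    show "N \<noteq> \<Union>t'"
    proof
      assume "N = \<Union>t'"
      then have eN: "e \<subseteq> N" using uni eT by simp
      show False
      proof (cases "N = ?A \<union> ?D")
        case True then have "?B \<subseteq> ?A \<union> ?D" using eN sd(6) by blast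
        then show False using sd(2,4,5,6) by blast
      next
        case False then have "N = ?B \<union> ?D" using sN(3) by blast
        then have "?A \<subseteq> ?B \<union> ?D" using eN sd(6) by blast
        then show False using sd(1,4,5,6) by blast
      qed
    qed
  qed
  have "N \<in> t'" using t'eq by simp
  then have ne': "t' \<noteq> t" using Nt by blast
  have "t' - {N} = t - {e}" using t'eq Nt by blast
  then have P1: "t' \<in> T_G Gam sig lam inp \<and> t' \<noteq> t \<and> internal_edge t' N \<and> contract_edge t e = contract_edge t' N"
    using t'TG ie' ne' unfolding contract_edge_def by simp
  have both: False if h1: "insert (?A \<union> ?D) (t - {e}) \<in> T_G Gam sig lam inp"
      and h2: "insert (?B \<union> ?D) (t - {e}) \<in> T_G Gam sig lam inp"
  proof -
    have o1: "ow ?E ?A ?B" using TG_ow[OF ac0 assms(2) sC] .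
    have o2: "ow ?E (?A \<union> ?B) ?D" using TG_ow[OF ac0 assms(2) sP] sd(6) by simp
    have s3: "splt (insert (?A \<union> ?D) (t - {e})) (?A \<union> ?D) ?A ?D \<and> splt (insert (?A \<union> ?D) (t - {e})) (e \<union> ?D) (?A \<union> ?D) ?B"
      using alt_splits[OF lt sC sP] .
    have s4: "splt (insert (?B \<union> ?D) (t - {e})) (?B \<union> ?D) ?B ?D \<and> splt (insert (?B \<union> ?D) (t - {e})) (e \<union> ?D) (?B \<union> ?D) ?A"
      using alt_splits[OF lt splt_sym[OF sC] sP] .
    have o3: "ow ?E ?A ?D" "ow ?E (?A \<union> ?D) ?B" using TG_ow[OF ac0 h1] s3 by blast+
    have o4: "ow ?E ?B ?D" "ow ?E (?B \<union> ?D) ?A" using TG_ow[OF ac0 h2] s4 by blast+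
    show False using tourn[OF o1 o2 o3(1) o3(2) o4(1) o4(2)] .
  qed
  show ?thesis
  proof (rule ex1I[of _ "(t', N)"])
    show "case (t', N) of (t', e') \<Rightarrow> t' \<in> T_G Gam sig lam inp \<and> t' \<noteq> t \<and> internal_edge t' e'
                    \<and> contract_edge t e = contract_edge t' e'" using P1 by simp
  next
    fix p assume hp: "case p of (t', e') \<Rightarrow> t' \<in> T_G Gam sig lam inp \<and> t' \<noteq> t \<and> internal_edge t' e'
                    \<and> contract_edge t e = contract_edge t' e'"
    obtain t2 e2 where p: "p = (t2, e2)" by (cases p)
    have H: "t2 \<in> T_G Gam sig lam inp" "t2 \<noteq> t" "internal_edge t2 e2" "t - {e} = t2 - {e2}"
      using hp p unfolding contract_edge_def by auto
    have g2: "good t2" using TG_good[OF H(1)] .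
    have ie2: "e2 \<in> t2" "2 \<le> card e2" "e2 \<noteq> \<Union>t2" using H(3) unfolding internal_edge_def by auto
    obtain x1 x2 where x12: "x1 \<in> e2" "x2 \<in> e2" "x1 \<noteq> x2" using two_elems[OF ie2(2)] by blast
    have sh2: "(e2 = ?A \<union> ?D \<or> e2 = ?B \<union> ?D) \<and> t2 = insert e2 (t - {e})"
      using shape[OF gt g2 sC sP ie2(1) x12 ie2(3) H(4)[symmetric] H(2)] .
    show "p = (t', N)"
    proof (cases "e2 = N")
      case True then show ?thesis using sh2 t'eq p by simp
    next
      case False
      then have "(e2 = ?A \<union> ?D \<and> N = ?B \<union> ?D) \<or> (e2 = ?B \<union> ?D \<and> N = ?A \<union> ?D)" using sh2 sN(3) by blast
      then show ?thesis using both H(1) sh2 t'eq t'TG by auto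
    qed
  qed
qed

end
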